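(* Define $\mathrm{Mex}(F)=\min(\mathbb{N}_0\setminus F)$ for $F\subseteq\mathbb{N}_0$, and $a+D=\{a+d:d\in D\}$. Define triples $v(n)=(v_1(n),v_2(n),v_3(n))$, $n\ge 0$, recursively by $v(0)=(0,0,0)$ and, for $n\ge 0$, with $F_n=\{v_i(k): 0\le k\le n,\ i\in\{1,2,3\}\}$ and $D_n=\bigcup_{k=0}^{n}\{v_2(k)-v_1(k),\,v_3(k)-v_2(k),\,v_3(k)-v_1(k)\}$, \[ v_1(n+1)=\mathrm{Mex}(F_n),\quad v_2(n+1)=\mathrm{Mex}\big((v_1(n+1)+D_n)\cup\{1,\dots,v_1(n+1)\}\cup F_n\big), \] \[ v_3(n+1)=\mathrm{Mex}\big((v_2(n+1)+D_n)\cup\{1,\dots,v_2(n+1)\}\cup F_n\big). \] Then for every $n\ge 0$, $v_1(n)-2v_2(n)+v_3(n)\in\{0,-1,-2\}$.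
   Context: $\mathbb{N}_0$ denotes the nonnegative integers. *)

theory Defs
  imports Main
begin

definition Mex :: "int set \<Rightarrow> int" where
  "Mex F = int (LEAST k::nat. int k \<notin> F)"

definition Fset :: "(int \<times> int \<times> int) list \<Rightarrow> int set" where
  "Fset L = (\<Union>(a,b,c)\<in>set L. {a, b, c})"

definition Dset :: "(int \<times> int \<times> int) list \<Rightarrow> int set" where
  "Dset L = (\<Union>(a,b,c)\<in>set L. {b - a, c - b, c - a})"

definition next_triple :: "(int \<times> int \<times> int) list \<Rightarrow> int \<times> int \<times> int" where
  "next_triple L =
     (let F = Fset L; D = Dset L;
          x1 = Mex F;
          x2 = Mex (((\<lambda>d. x1 + d) ` D) \<union> {1..x1} \<union> F);
          x3 = Mex (((\<lambda>d. x2 + d) ` D) \<union> {1..x2} \<union> F)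
      in (x1, x2, x3))"

primrec vs :: "nat \<Rightarrow> (int \<times> int \<times> int) list" where
  "vs 0 = [(0,0,0)]"
| "vs (Suc n) = vs n @ [next_triple (vs n)]"

definition v :: "nat \<Rightarrow> int \<times> int \<times> int" where
  "v n = vs n ! n"

definition v1 :: "nat \<Rightarrow> int" where "v1 n = fst (v n)"
definition v2 :: "nat \<Rightarrow> int" where "v2 n = fst (snd (v n))"
definition v3 :: "nat \<Rightarrow> int" where "v3 n = snd (snd (v n))"

end

theory Submission
  imports Defs
begin

definition Cset :: "(int \<times> int \<times> int) list \<Rightarrow> int set" where
  "Cset L = (\<Union>(a,b,c)\<in>set L. {c})"

definition JJ :: "(int \<times> int \<times> int) list \<Rightarrow> bool" where
  "JJ L \<longleftrightarrow> (0,0,0) \<in> set L \<and>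
     (\<forall>x\<in>Fset L. x < Mex (Fset L) + Mex (Dset L) \<or> x \<in> Cset L) \<and>
     (\<forall>c\<in>Cset L. c \<le> Mex (Fset L) + 2 * Mex (Dset L) - 3 \<and> c + 1 \<notin> Cset L \<and> c + 2 \<notin> Cset L) \<and>
     (\<forall>d\<in>Dset L. d < Mex (Dset L) \<or> (d \<le> 2 * Mex (Dset L) - 2 \<and> d + 1 \<notin> Dset L))"

lemma Mex_ge0: "Mex S \<ge> 0"
  unfolding Mex_def by simp

lemma Mex_notin:
  assumes "finite S" shows "Mex S \<notin> S"
proof -
  have "finite (int -` S)" using assms by (simp add: finite_vimageI)
  then obtain k :: nat where "k \<notin> int -` S"
    using ex_new_if_finite[OF infinite_UNIV_nat] by blast
  then have "int k \<notin> S" by simp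
  then have "int (LEAST k::nat. int k \<notin> S) \<notin> S" by (rule LeastI)
  then show ?thesis unfolding Mex_def .
qed

lemma Mex_below:
  assumes "0 \<le> j" "j < Mex S" shows "j \<in> S"
proof -
  have "nat j < (LEAST k::nat. int k \<notin> S)" using assms unfolding Mex_def by linarith
  then have "\<not> (int (nat j) \<notin> S)" by (rule not_less_Least)
  then show ?thesis using assms by simp
qed

lemma Mex_eqI:
  assumes "0 \<le> k" "k \<notin> S" "\<And>j. 0 \<le> j \<Longrightarrow> j < k \<Longrightarrow> j \<in> S"
  shows "Mex S = k"
proof -
  have "(LEAST i::nat. int i \<notin> S) = nat k"
  proof (rule Least_equality)
    show "int (nat k) \<notin> S" using assms by simp
    fix y :: nat assume "int y \<notin> S"
    then show "nat k \<le> y" using assms(3)[of "int y"] by fastforce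
  qed
  then show ?thesis unfolding Mex_def using assms by simp
qed

lemma Mex_geI:
  assumes "finite S" "\<And>j. 0 \<le> j \<Longrightarrow> j < k \<Longrightarrow> j \<in> S"
  shows "k \<le> Mex S"
  using Mex_notin[OF assms(1)] assms(2)[of "Mex S"] Mex_ge0[of S] by force

lemma fin_F: "finite (Fset L)" unfolding Fset_def by auto
lemma fin_D: "finite (Dset L)" unfolding Dset_def by auto

lemma Fset_app: "Fset (L @ [(x,y,z)]) = Fset L \<union> {x,y,z}" unfolding Fset_def by auto
lemma Dset_app: "Dset (L @ [(x,y,z)]) = Dset L \<union> {y-x,z-y,z-x}" unfolding Dset_def by auto
lemma Cset_app: "Cset (L @ [(x,y,z)]) = Cset L \<union> {z}" unfolding Cset_def by auto

lemma step:
  assumes J: "JJ L"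
  defines "F \<equiv> Fset L" and "D \<equiv> Dset L"
  defines "a \<equiv> Mex F" and "m \<equiv> Mex D"
  shows "\<exists>\<delta>. \<delta> \<in> {0,1,2} \<and> next_triple L = (a, a+m+\<delta>, a+2*m+\<delta>) \<and> JJ (L @ [next_triple L])"
proof -
  have finF: "finite F" unfolding F_def by (rule fin_F)
  have finD: "finite D" unfolding D_def by (rule fin_D)
  have J0: "(0,0,0) \<in> set L" using J unfolding JJ_def by blast
  have J1: "\<forall>x\<in>F. x < a + m \<or> x \<in> Cset L" using J unfolding JJ_def F_def D_def a_def m_def by blast
  have J2: "\<forall>c\<in>Cset L. c \<le> a + 2 * m - 3 \<and> c + 1 \<notin> Cset L \<and> c + 2 \<notin> Cset L"
    using J unfolding JJ_def F_def D_def a_def m_def by blast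
  have J3: "\<forall>d\<in>D. d < m \<or> (d \<le> 2 * m - 2 \<and> d + 1 \<notin> D)"
    using J unfolding JJ_def F_def D_def a_def m_def by blast
  have F0: "0 \<in> F" using J0 unfolding F_def Fset_def by force
  have D0: "0 \<in> D" using J0 unfolding D_def Dset_def by force
  have aF: "a \<notin> F" unfolding a_def using Mex_notin[OF finF] .
  have mD: "m \<notin> D" unfolding m_def using Mex_notin[OF finD] .
  have a1: "a \<ge> 1" using aF F0 Mex_ge0[of F] unfolding a_def by (cases "Mex F = 0") auto
  have m1: "m \<ge> 1" using mD D0 Mex_ge0[of D] unfolding m_def by (cases "Mex D = 0") auto
  have Fb: "\<And>j. 0 \<le> j \<Longrightarrow> j < a \<Longrightarrow> j \<in> F" unfolding a_def by (rule Mex_below)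
  have Db: "\<And>j. 0 \<le> j \<Longrightarrow> j < m \<Longrightarrow> j \<in> D" unfolding m_def by (rule Mex_below)
  have Dle: "\<And>d. d \<in> D \<Longrightarrow> d \<le> 2 * m - 2" using J3 m1 by force
  obtain \<delta> where d012: "\<delta> \<in> {0,1,2}" and dD: "m + \<delta> \<notin> D" and dF: "a + m + \<delta> \<notin> F"
    and d1: "\<delta> \<ge> 1 \<Longrightarrow> a + m \<in> F" and d2: "\<delta> = 2 \<Longrightarrow> m + 1 \<in> D"
  proof (cases "a + m \<in> F")
    case False
    then show ?thesis using that[of 0] mD by auto
  next
    case True
    then have C: "a + m \<in> Cset L" using J1 by auto
    have n1: "a + m + 1 \<notin> F" "a + m + 2 \<notin> F"
    proof -
      have "a + m + 1 \<notin> Cset L" "a + m + 2 \<notin> Cset L" using J2 C by auto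
      then show "a + m + 1 \<notin> F" "a + m + 2 \<notin> F" using J1 by force+
    qed
    show ?thesis
    proof (cases "m + 1 \<in> D")
      case False
      then show ?thesis using that[of 1] n1 True by auto
    next
      case True2: True
      then have "m + 2 \<notin> D" using J3 by (auto simp: add.assoc)
      then show ?thesis using that[of 2] n1 True True2 by (auto simp: add.assoc)
    qed
  qed
  have d0: "0 \<le> \<delta>" "\<delta> \<le> 2" using d012 by auto
  define x2 where "x2 = a + m + \<delta>"
  have X2: "Mex ((\<lambda>d. a + d) ` D \<union> {1..a} \<union> F) = x2"
  proof (rule Mex_eqI)
    show "0 \<le> x2" unfolding x2_def using a1 m1 d0 by simp
    show "x2 \<notin> (\<lambda>d. a + d) ` D \<union> {1..a} \<union> F" unfolding x2_def using dD dF m1 d0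
      by (auto simp: add.assoc)
    fix j assume j: "0 \<le> j" "j < x2"
    show "j \<in> (\<lambda>d. a + d) ` D \<union> {1..a} \<union> F"
    proof -
      consider "j = 0" | "1 \<le> j \<and> j \<le> a" | "a < j \<and> j < a + m" | "j = a + m" | "j = a + m + 1"
        using j d0 unfolding x2_def by linarith
      then show ?thesis
      proof cases
        case 1 then show ?thesis using F0 by simp
      next
        case 2 then show ?thesis by simp
      next
        case 3
        then have "j - a \<in> D" using Db by simp
        then have "a + (j - a) \<in> (\<lambda>d. a + d) ` D" by blast
        then show ?thesis by simp
      next
        case 4 then have "\<delta> \<ge> 1" using j unfolding x2_def by simp
        then show ?thesis using d1 4 by simp
      next
        case 5 then have "\<delta> = 2" using j d012 unfolding x2_def by auto
        then have "a + (m + 1) \<in> (\<lambda>d. a + d) ` D" using d2 by blast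
        then show ?thesis using 5 by (simp add: add.assoc)
      qed
    qed
  qed
  define x3 where "x3 = x2 + m"
  have X3: "Mex ((\<lambda>d. x2 + d) ` D \<union> {1..x2} \<union> F) = x3"
  proof (rule Mex_eqI)
    show "0 \<le> x3" unfolding x3_def x2_def using a1 m1 d0 by simp
    have "x3 \<notin> F"
    proof
      assume "x3 \<in> F"
      then have "x3 < a + m \<or> x3 \<in> Cset L" using J1 by auto
      then show False using J2 m1 d0 unfolding x3_def x2_def by force
    qed
    then show "x3 \<notin> (\<lambda>d. x2 + d) ` D \<union> {1..x2} \<union> F" unfolding x3_def using mD m1
      by auto
    fix j assume j: "0 \<le> j" "j < x3"
    show "j \<in> (\<lambda>d. x2 + d) ` D \<union> {1..x2} \<union> F"
    proof (cases "j \<le> x2")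
      case True
      then show ?thesis using F0 j(1) by (cases "j = 0") auto
    next
      case False
      then have "j - x2 \<in> D" using Db j unfolding x3_def by simp
      then have "x2 + (j - x2) \<in> (\<lambda>d. x2 + d) ` D" by blast
      then show ?thesis by simp
    qed
  qed
  have nt: "next_triple L = (a, x2, x3)"
    unfolding next_triple_def Let_def F_def[symmetric] D_def[symmetric] a_def[symmetric]
    using X2 X3 by simp
  define L' where "L' = L @ [(a, x2, x3)]"
  have F': "Fset L' = F \<union> {a, x2, x3}" unfolding L'_def F_def by (rule Fset_app)
  have D': "Dset L' = D \<union> {m + \<delta>, m, 2 * m + \<delta>}" unfolding L'_def D_def Dset_app x2_def x3_def
    by (auto simp: algebra_simps)
  have C': "Cset L' = Cset L \<union> {x3}" unfolding L'_def by (rule Cset_app)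
  have a': "a + 1 \<le> Mex (Fset L')"
  proof (rule Mex_geI)
    show "finite (Fset L')" by (rule fin_F)
    fix j assume "0 \<le> j" "j < a + 1"
    then show "j \<in> Fset L'" using Fb unfolding F' by (cases "j = a") auto
  qed
  have m': "m + 1 + \<delta> \<le> Mex (Dset L')"
  proof (rule Mex_geI)
    show "finite (Dset L')" by (rule fin_D)
    fix j assume j: "0 \<le> j" "j < m + 1 + \<delta>"
    then consider "j < m" | "j = m" | "j = m + \<delta>" | "\<delta> = 2 \<and> j = m + 1" using d012 by fastforce
    then show "j \<in> Dset L'"
      by cases (use Db j d2 in \<open>auto simp: D'\<close>)
  qed
  define a'' where "a'' = Mex (Fset L')"
  define m'' where "m'' = Mex (Dset L')"
  have a2: "a + 1 \<le> a''" using a' unfolding a''_def .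
  have m2: "m + 1 + \<delta> \<le> m''" using m' unfolding m''_def .
  have K0: "(0,0,0) \<in> set L'" using J0 unfolding L'_def by simp
  have K1: "\<forall>x\<in>Fset L'. x < a'' + m'' \<or> x \<in> Cset L'"
    using J1 a2 m2 d0 m1 a1 unfolding F' C' x3_def x2_def
    by force
  have K2: "\<forall>c\<in>Cset L'. c \<le> a'' + 2 * m'' - 3 \<and> c + 1 \<notin> Cset L' \<and> c + 2 \<notin> Cset L'"
    using J2 a2 m2 d0 m1 a1 unfolding C' x3_def x2_def
    by force
  have K3: "\<forall>d\<in>Dset L'. d < m'' \<or> (d \<le> 2 * m'' - 2 \<and> d + 1 \<notin> Dset L')"
  proof
    fix d assume "d \<in> Dset L'"
    then consider "d \<in> D" | "d = m + \<delta>" | "d = m" | "d = 2 * m + \<delta>" unfolding D' by auto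
    then show "d < m'' \<or> (d \<le> 2 * m'' - 2 \<and> d + 1 \<notin> Dset L')"
    proof cases
      case 1
      show ?thesis
      proof (cases "d < m''")
        case False
        then have "d > m" using m2 d0 by simp
        then have "d \<le> 2 * m - 2 \<and> d + 1 \<notin> D" using J3 1 by force
        then show ?thesis using m2 d0 False unfolding D' by auto
      qed simp
    next
      case 2 then show ?thesis using m2 by simp
    next
      case 3 then show ?thesis using m2 d0 by simp
    next
      case 4
      have "d + 1 \<notin> D" using Dle 4 d0 by force
      then show ?thesis using 4 m2 d0 m1 unfolding D' by auto
    qed
  qed
  have "JJ L'" unfolding JJ_def using K0 K1 K2 K3 unfolding a''_def m''_def by blast
  then show ?thesis using nt d012 unfolding L'_def x3_def x2_def
    by (intro exI[of _ \<delta>]) (auto simp: algebra_simps)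
qed

lemma JJ_vs: "JJ (vs n)"
proof (induction n)
  case 0
  have F: "Fset [(0,0,0)] = {0}" unfolding Fset_def by simp
  have D: "Dset [(0,0,0)] = {0}" unfolding Dset_def by simp
  have C: "Cset [(0,0,0)] = {0}" unfolding Cset_def by simp
  have M: "Mex {0} = 1" by (rule Mex_eqI) auto
  show ?case unfolding JJ_def using M by (simp add: F D C)
next
  case (Suc n)
  then show ?case using step[of "vs n"] by auto
qed

lemma length_vs: "length (vs n) = Suc n"
  by (induction n) auto

lemma v_Suc: "v (Suc n) = next_triple (vs n)"
  unfolding v_def using length_vs[of n] by (simp add: nth_append)

theorem corollary5:
  fixes n :: nat
  shows "v1 n - 2 * v2 n + v3 n \<in> {0, -1, -2}"
proof (cases n)
  case 0
  then show ?thesis unfolding v1_def v2_def v3_def v_def by simp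
next
  case (Suc k)
  obtain \<delta> a m where "\<delta> \<in> {0,1,2}" "next_triple (vs k) = (a, a+m+\<delta>, a+2*m+\<delta>)"
    using step[OF JJ_vs[of k]] by blast
  then show ?thesis unfolding v1_def v2_def v3_def Suc v_Suc by auto
qed

end
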